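(* Fix an integer $q\geq2$ and let $\mathbb{X}=\{X_k,k\in\mathbb{N}\}$ be a sequence of centered independent non-deterministic real random variables (in particular each $X_k$ is integrable). Let $(F_n,n\ge1)$ be random variables given by $F_n=\mathbb{E}[F_n]+\sum_{p=1}^q Q_p(f_{p,n};\mathbb{X})$ with $f_{p,n}\in\ell^2_0(\mathbb{N})^{\odot p}$ for each $p\in\{1,\dots,q\}$. Assume $d>q$ is an integer such that the support of $f_{p,n}$ is contained in $\{1,\dots,d\}^p$ for all $p\in\{1,\dots,q\}$ and $n\ge1$. Suppose $F_n$ converges almost surely to $F$, where $F=\mathbb{E}[F]+\sum_{p=1}^q Q_p(f_p;\mathbb{X})$ with $f_p\in\ell^2_0(\mathbb{N})^{\odot p}$ for each $p\in\{1,\dots,q\}$. Then, as $n\to\infty$, $\mathbb{E}[F_n]\to\mathbb{E}[F]$, and for every $p\in\{1,\dots,q\}$, $Q_p(f_{p,n};\mathbb{X})$ converges almost surely to $Q_p(f_p;\mathbb{X})$.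
   Context: $\mathbb{N}=\{1,2,\dots\}$. For $p\geq1$, $\ell^2_0(\mathbb{N})^{\odot p}$ is the set of square-summable functions $f$ on $\mathbb{N}^p$ that are symmetric in their arguments and vanish on diagonals ($f(i_1,\dots,i_p)=0$ whenever $i_j=i_k$ for some $j\ne k$). For such $f$, $Q_p(f;\mathbb{X})=\sum_{i_1,\dots,i_p\in\mathbb{N}} f(i_1,\dots,i_p)X_{i_1}\cdots X_{i_p}$, whenever this sum is well defined (e.g. when $f$ has finite support). *)

theory Defs
  imports "HOL-Probability.Probability"
begin

text \<open>Kernels on \<open>\<nat>^p\<close> (with \<open>\<nat> = {1,2,...}\<close>) are represented as functions on
  lists of natural numbers; the value on a list of length \<open>p\<close> with all entries
  \<open>\<ge> 1\<close> is the value of the kernel at that tuple, and the function is \<open>0\<close> elsewhere.\<close>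

definition tuples :: "nat \<Rightarrow> nat set \<Rightarrow> nat list set" where
  "tuples p A = {is. length is = p \<and> set is \<subseteq> A}"

definition l2_sym0 :: "nat \<Rightarrow> (nat list \<Rightarrow> real) \<Rightarrow> bool" where
  "l2_sym0 p f \<longleftrightarrow>
     (\<forall>is. is \<notin> tuples p {1..} \<longrightarrow> f is = 0) \<and>
     (\<forall>is js. mset is = mset js \<longrightarrow> f is = f js) \<and>
     (\<forall>is. \<not> distinct is \<longrightarrow> f is = 0) \<and>
     (\<lambda>is. (f is)\<^sup>2) summable_on tuples p {1..}"

definition Q_partial :: "nat \<Rightarrow> (nat list \<Rightarrow> real) \<Rightarrow> (nat \<Rightarrow> 'a \<Rightarrow> real) \<Rightarrow> nat \<Rightarrow> 'a \<Rightarrow> real" where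
  "Q_partial p f X N \<omega> = (\<Sum>is\<in>tuples p {1..N}. f is * prod_list (map (\<lambda>i. X i \<omega>) is))"

definition Q :: "nat \<Rightarrow> (nat list \<Rightarrow> real) \<Rightarrow> (nat \<Rightarrow> 'a \<Rightarrow> real) \<Rightarrow> 'a \<Rightarrow> real" where
  "Q p f X \<omega> = lim (\<lambda>N. Q_partial p f X N \<omega>)"

definition Q_defined :: "nat \<Rightarrow> (nat list \<Rightarrow> real) \<Rightarrow> (nat \<Rightarrow> 'a \<Rightarrow> real) \<Rightarrow> 'a \<Rightarrow> bool" where
  "Q_defined p f X \<omega> \<longleftrightarrow> convergent (\<lambda>N. Q_partial p f X N \<omega>)"

end

theory Submission imports Defs "HOL-Combinatorics.Multiset_Permutations" begin


definition Rel :: "(nat \<Rightarrow> real) \<Rightarrow> (nat \<Rightarrow> real) \<Rightarrow> bool" where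
  "Rel u v \<longleftrightarrow> (\<exists>L. u \<longlonglongrightarrow> L \<and> v \<longlonglongrightarrow> L)"

lemma Rel_alt: "Rel u v \<longleftrightarrow> Cauchy u \<and> Cauchy v \<and> lim u = lim v"
  unfolding Rel_def
  by (metis Cauchy_convergent_iff convergent_LIMSEQ_iff convergent_def limI)

lemma pred_Rel[measurable]:
  fixes f g :: "nat \<Rightarrow> 'b \<Rightarrow> real"
  assumes [measurable]: "\<And>n. f n \<in> borel_measurable N" "\<And>n. g n \<in> borel_measurable N"
  shows "{x \<in> space N. Rel (\<lambda>n. f n x) (\<lambda>n. g n x)} \<in> sets N"
  unfolding Rel_alt by measurable

lemma Rel_ev:
  assumes "\<And>n. n \<ge> m \<Longrightarrow> u n = u' n" "\<And>n. n \<ge> m \<Longrightarrow> v n = v' n"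
  shows "Rel u v \<longleftrightarrow> Rel u' v'"
proof -
  have "eventually (\<lambda>n. u n = u' n) sequentially" "eventually (\<lambda>n. v n = v' n) sequentially"
    using assms by (auto simp: eventually_sequentially)
  then show ?thesis unfolding Rel_def
    by (metis (mono_tags, lifting) tendsto_cong)
qed

lemma Rel_two_points:
  fixes x1 x2 :: real
  assumes "x1 \<noteq> x2"
    and "Rel (\<lambda>n. a n + x1 * b n) (\<lambda>n. a' n + x1 * b' n)"
    and "Rel (\<lambda>n. a n + x2 * b n) (\<lambda>n. a' n + x2 * b' n)"
  shows "Rel a a' \<and> Rel b b'"
proof -
  obtain L1 where L1: "(\<lambda>n. a n + x1 * b n) \<longlonglongrightarrow> L1" "(\<lambda>n. a' n + x1 * b' n) \<longlonglongrightarrow> L1"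
    using assms(2) unfolding Rel_def by blast
  obtain L2 where L2: "(\<lambda>n. a n + x2 * b n) \<longlonglongrightarrow> L2" "(\<lambda>n. a' n + x2 * b' n) \<longlonglongrightarrow> L2"
    using assms(3) unfolding Rel_def by blast
  have eb: "\<And>a b :: nat \<Rightarrow> real. (\<lambda>n. b n) = (\<lambda>n. ((a n + x1 * b n) - (a n + x2 * b n)) / (x1 - x2))"
    using assms(1) by (auto simp: fun_eq_iff field_simps)
  have ea: "\<And>a b :: nat \<Rightarrow> real. (\<lambda>n. a n) = (\<lambda>n. (a n + x1 * b n) - x1 * (((a n + x1 * b n) - (a n + x2 * b n)) / (x1 - x2)))"
    using assms(1) by (auto simp: fun_eq_iff field_simps)
  have d: "x1 - x2 \<noteq> 0" using assms(1) by simp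
  have t1: "(\<lambda>n. ((a n + x1 * b n) - (a n + x2 * b n)) / (x1 - x2)) \<longlonglongrightarrow> (L1 - L2) / (x1 - x2)"
    by (intro tendsto_intros L1 L2 d)
  have t2: "(\<lambda>n. ((a' n + x1 * b' n) - (a' n + x2 * b' n)) / (x1 - x2)) \<longlonglongrightarrow> (L1 - L2) / (x1 - x2)"
    by (intro tendsto_intros L1 L2 d)
  have t3: "(\<lambda>n. (a n + x1 * b n) - x1 * (((a n + x1 * b n) - (a n + x2 * b n)) / (x1 - x2))) \<longlonglongrightarrow> L1 - x1 * ((L1 - L2) / (x1 - x2))"
    by (intro tendsto_intros L1 L2 d)
  have t4: "(\<lambda>n. (a' n + x1 * b' n) - x1 * (((a' n + x1 * b' n) - (a' n + x2 * b' n)) / (x1 - x2))) \<longlonglongrightarrow> L1 - x1 * ((L1 - L2) / (x1 - x2))"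
    by (intro tendsto_intros L1 L2 d)
  have "b \<longlonglongrightarrow> (L1 - L2) / (x1 - x2)" using t1 proof -
    have "(\<lambda>n. ((a n + x1 * b n) - (a n + x2 * b n)) / (x1 - x2)) = b" using d by (auto simp: fun_eq_iff field_simps)
    then show ?thesis using t1 by simp
  qed
  moreover have "b' \<longlonglongrightarrow> (L1 - L2) / (x1 - x2)" using t2 proof -
    have "(\<lambda>n. ((a' n + x1 * b' n) - (a' n + x2 * b' n)) / (x1 - x2)) = b'" using d by (auto simp: fun_eq_iff field_simps)
    then show ?thesis using t2 by simp
  qed
  moreover have "a \<longlonglongrightarrow> L1 - x1 * ((L1 - L2) / (x1 - x2))" proof -
    have "(\<lambda>n. (a n + x1 * b n) - x1 * (((a n + x1 * b n) - (a n + x2 * b n)) / (x1 - x2))) = a" using d by (auto simp: fun_eq_iff field_simps)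
    then show ?thesis using t3 by simp
  qed
  moreover have "a' \<longlonglongrightarrow> L1 - x1 * ((L1 - L2) / (x1 - x2))" proof -
    have "(\<lambda>n. (a' n + x1 * b' n) - x1 * (((a' n + x1 * b' n) - (a' n + x2 * b' n)) / (x1 - x2))) = a'" using d by (auto simp: fun_eq_iff field_simps)
    then show ?thesis using t4 by simp
  qed
  ultimately show ?thesis unfolding Rel_def by blast
qed

lemma (in prob_space) two_points:
  fixes h :: "'c \<Rightarrow> real"
  assumes W: "random_variable N1 W" and h[measurable]: "h \<in> borel_measurable N1"
    and nd: "\<not> (\<exists>c. AE \<omega> in M. h (W \<omega>) = c)"
    and ae: "AE x in distr M N1 W. P x"
  shows "\<exists>x1 x2. h x1 \<noteq> h x2 \<and> P x1 \<and> P x2"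
proof (rule ccontr)
  assume no: "\<not> ?thesis"
  interpret D: prob_space "distr M N1 W" by (rule prob_space_distr[OF W])
  obtain x1 where x1: "P x1"
  proof -
    have "\<exists>x. P x"
    proof (rule ccontr)
      assume "\<not> (\<exists>x. P x)"
      with ae have "AE x in distr M N1 W. False" by simp
      then show False by simp
    qed
    then show ?thesis using that by blast
  qed
  have "AE x in distr M N1 W. h x = h x1"
    using ae by eventually_elim (use no x1 in blast)
  then have "AE \<omega> in M. h (W \<omega>) = h x1"
    by (subst (asm) AE_distr_iff) (use W in auto)
  with nd show False by blast
qed

lemma (in prob_space) peel:
  fixes h :: "'c \<Rightarrow> real" and W Y :: "'a \<Rightarrow> 'c" and a b a' b' :: "nat \<Rightarrow> 'c \<Rightarrow> real"
  assumes ind: "indep_var N1 W N Y" and h[measurable]: "h \<in> borel_measurable N1"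
    and nd: "\<not> (\<exists>c. AE \<omega> in M. h (W \<omega>) = c)"
    and [measurable]: "\<And>n. a n \<in> borel_measurable N" "\<And>n. b n \<in> borel_measurable N"
      "\<And>n. a' n \<in> borel_measurable N" "\<And>n. b' n \<in> borel_measurable N"
    and ae: "AE \<omega> in M. Rel (\<lambda>n. a n (Y \<omega>) + h (W \<omega>) * b n (Y \<omega>)) (\<lambda>n. a' n (Y \<omega>) + h (W \<omega>) * b' n (Y \<omega>))"
  shows "AE \<omega> in M. Rel (\<lambda>n. a n (Y \<omega>)) (\<lambda>n. a' n (Y \<omega>)) \<and> Rel (\<lambda>n. b n (Y \<omega>)) (\<lambda>n. b' n (Y \<omega>))"
proof -
  have rv[measurable]: "random_variable N1 W" "random_variable N Y"
    and eq: "distr M N1 W \<Otimes>\<^sub>M distr M N Y = distr M (N1 \<Otimes>\<^sub>M N) (\<lambda>x. (W x, Y x))"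
    using ind by (simp_all add: indep_var_distribution_eq)
  interpret DZ: prob_space "distr M N1 W" by (rule prob_space_distr[OF rv(1)])
  interpret DY: prob_space "distr M N Y" by (rule prob_space_distr[OF rv(2)])
  interpret P: pair_prob_space "distr M N1 W" "distr M N Y" ..
  define G where "G p = Rel (\<lambda>n. a n (snd p) + h (fst p) * b n (snd p)) (\<lambda>n. a' n (snd p) + h (fst p) * b' n (snd p))" for p
  have [measurable]: "{p \<in> space (N1 \<Otimes>\<^sub>M N). G p} \<in> sets (N1 \<Otimes>\<^sub>M N)"
    unfolding G_def by measurable
  have "AE p in distr M (N1 \<Otimes>\<^sub>M N) (\<lambda>x. (W x, Y x)). G p"
    using ae by (subst AE_distr_iff) (simp_all add: G_def)
  then have "AE p in distr M N1 W \<Otimes>\<^sub>M distr M N Y. G p" unfolding eq .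
  then have "AE x in distr M N1 W. AE y in distr M N Y. G (x, y)" by (rule P.AE_pair)
  then obtain x1 x2 where x12: "h x1 \<noteq> h x2" "AE y in distr M N Y. G (x1, y)" "AE y in distr M N Y. G (x2, y)"
    using two_points[OF rv(1) h nd] by blast
  have "AE y in distr M N Y. Rel (\<lambda>n. a n y) (\<lambda>n. a' n y) \<and> Rel (\<lambda>n. b n y) (\<lambda>n. b' n y)"
    using x12(2,3) by eventually_elim (rule Rel_two_points[OF x12(1)], simp_all add: G_def)
  moreover have m: "{y \<in> space N. Rel (\<lambda>n. a n y) (\<lambda>n. a' n y) \<and> Rel (\<lambda>n. b n y) (\<lambda>n. b' n y)} \<in> sets N"
    by measurable
  ultimately show ?thesis
    using AE_distr_iff[OF rv(2) m] by simp
qed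



definition evalP :: "(nat set \<Rightarrow> real) \<Rightarrow> nat set \<Rightarrow> (nat \<Rightarrow> real) \<Rightarrow> real" where
  "evalP k A y = (\<Sum>S\<in>Pow A. k S * (\<Prod>i\<in>S. y i))"

lemma evalP_insert:
  assumes "finite A" "m \<notin> A"
  shows "evalP k (insert m A) y = evalP k A y + y m * evalP (\<lambda>S. k (insert m S)) A y"
proof -
  have fin: "finite (Pow A)" using assms by simp
  have disj: "Pow A \<inter> insert m ` Pow A = {}" using assms by auto
  have inj: "inj_on (insert m) (Pow A)" using assms by (auto simp: inj_on_def)
  have "evalP k (insert m A) y = (\<Sum>S\<in>Pow A. k S * (\<Prod>i\<in>S. y i)) + (\<Sum>S\<in>insert m ` Pow A. k S * (\<Prod>i\<in>S. y i))"
    unfolding evalP_def Pow_insert by (rule sum.union_disjoint) (use fin disj in auto)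
  also have "(\<Sum>S\<in>insert m ` Pow A. k S * (\<Prod>i\<in>S. y i)) = (\<Sum>S\<in>Pow A. k (insert m S) * (\<Prod>i\<in>insert m S. y i))"
    by (rule sum.reindex[OF inj, unfolded comp_def])
  also have "\<dots> = (\<Sum>S\<in>Pow A. y m * (k (insert m S) * (\<Prod>i\<in>S. y i)))"
  proof (rule sum.cong[OF refl])
    fix S assume "S \<in> Pow A"
    then have "finite S" "m \<notin> S" using assms finite_subset by auto
    then show "k (insert m S) * (\<Prod>i\<in>insert m S. y i) = y m * (k (insert m S) * (\<Prod>i\<in>S. y i))"
      by (simp add: prod.insert)
  qed
  finally show ?thesis unfolding evalP_def by (simp add: sum_distrib_left)
qed

lemma evalP_cong: "(\<And>i. i \<in> A \<Longrightarrow> y i = z i) \<Longrightarrow> evalP k A y = evalP k A z"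
  unfolding evalP_def
  by (intro sum.cong refl arg_cong2[where f="(*)"] prod.cong) auto

lemma evalP_meas[measurable]:
  assumes "finite A" "A \<subseteq> J"
  shows "(\<lambda>y. evalP k A y) \<in> borel_measurable (PiM J (\<lambda>_. borel))"
proof -
  have "\<And>S. S \<in> Pow A \<Longrightarrow> (\<lambda>y. k S * (\<Prod>i\<in>S. y i)) \<in> borel_measurable (PiM J (\<lambda>_. borel))"
  proof -
    fix S assume S: "S \<in> Pow A"
    have "\<And>i. i \<in> S \<Longrightarrow> (\<lambda>y. y i) \<in> borel_measurable (PiM J (\<lambda>_. borel :: real measure))"
      using S assms by (auto intro!: measurable_component_singleton)
    then show "(\<lambda>y. k S * (\<Prod>i\<in>S. y i)) \<in> borel_measurable (PiM J (\<lambda>_. borel))"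
      by (intro borel_measurable_times borel_measurable_const borel_measurable_prod) auto
  qed
  then show ?thesis unfolding evalP_def by (intro borel_measurable_sum) auto
qed

lemma evalP_empty[simp]: "evalP k {} y = k {}"
  by (simp add: evalP_def)

lemma evalP_only_empty:
  assumes "finite A" "\<And>S. S \<subseteq> A \<Longrightarrow> S \<noteq> {} \<Longrightarrow> k S = 0"
  shows "evalP k A y = k {}"
proof -
  have "evalP k A y = (\<Sum>S\<in>{{}}. k S * (\<Prod>i\<in>S. y i))"
    unfolding evalP_def by (rule sum.mono_neutral_right) (use assms in auto)
  then show ?thesis by simp
qed

lemma Rel_const: "Rel (\<lambda>_. a) (\<lambda>_. b) \<longleftrightarrow> a = b"
  unfolding Rel_def using LIMSEQ_unique[of "\<lambda>_. a" a] LIMSEQ_unique[of "\<lambda>_. b" b] tendsto_const by metis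

lemma Rel_lim: "Rel u v \<Longrightarrow> u \<longlonglongrightarrow> L \<Longrightarrow> Rel v (\<lambda>_. L)"
  unfolding Rel_def using LIMSEQ_unique by blast

lemma Rel_limD: "Rel u (\<lambda>_. L) \<Longrightarrow> u \<longlonglongrightarrow> L"
  unfolding Rel_def using LIMSEQ_unique by auto

lemma (in prob_space) AE_ex: "AE x in M. P x \<Longrightarrow> \<exists>x. P x"
proof (rule ccontr)
  assume "AE x in M. P x" "\<not> (\<exists>x. P x)"
  then have "AE x in M. False" by simp
  then show False by simp
qed

locale chaos = prob_space M for M :: "'a measure" +
  fixes X :: "nat \<Rightarrow> 'a \<Rightarrow> real"
  assumes indepX: "indep_vars (\<lambda>_. borel) X {1..}"
    and nondetX: "\<And>k. k \<ge> 1 \<Longrightarrow> \<not> (\<exists>c. AE \<omega> in M. X k \<omega> = c)"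
begin

definition xs :: "'a \<Rightarrow> nat \<Rightarrow> real" where "xs \<omega> = (\<lambda>i. X i \<omega>)"
definition Ym :: "nat \<Rightarrow> 'a \<Rightarrow> nat \<Rightarrow> real" where "Ym m \<omega> = restrict (\<lambda>i. X i \<omega>) {m<..}"

lemma split_Y:
  assumes "finite A" "A \<subseteq> {m<..}"
  shows "evalP k (insert m A) (xs \<omega>) = evalP k A (Ym m \<omega>) + X m \<omega> * evalP (\<lambda>S. k (insert m S)) A (Ym m \<omega>)"
proof -
  have "m \<notin> A" using assms by auto
  have c: "evalP k' A (Ym m \<omega>) = evalP k' A (xs \<omega>)" for k'
    by (rule evalP_cong) (use assms in \<open>auto simp: Ym_def xs_def\<close>)
  show ?thesis unfolding c using evalP_insert[OF assms(1) \<open>m \<notin> A\<close>] by (simp add: xs_def)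
qed

lemma peelX:
  fixes a b a' b' :: "nat \<Rightarrow> (nat \<Rightarrow> real) \<Rightarrow> real"
  assumes m: "m \<ge> 1"
    and [measurable]: "\<And>n. a n \<in> borel_measurable (PiM {m<..} (\<lambda>_. borel))" "\<And>n. b n \<in> borel_measurable (PiM {m<..} (\<lambda>_. borel))"
      "\<And>n. a' n \<in> borel_measurable (PiM {m<..} (\<lambda>_. borel))" "\<And>n. b' n \<in> borel_measurable (PiM {m<..} (\<lambda>_. borel))"
    and ae: "AE \<omega> in M. Rel (\<lambda>n. a n (Ym m \<omega>) + X m \<omega> * b n (Ym m \<omega>)) (\<lambda>n. a' n (Ym m \<omega>) + X m \<omega> * b' n (Ym m \<omega>))"
  shows "AE \<omega> in M. Rel (\<lambda>n. a n (Ym m \<omega>)) (\<lambda>n. a' n (Ym m \<omega>)) \<and> Rel (\<lambda>n. b n (Ym m \<omega>)) (\<lambda>n. b' n (Ym m \<omega>))"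
proof -
  have ind: "indep_var (PiM {m} (\<lambda>_. borel)) (\<lambda>\<omega>. restrict (\<lambda>i. X i \<omega>) {m}) (PiM {m<..} (\<lambda>_. borel)) (\<lambda>\<omega>. restrict (\<lambda>i. X i \<omega>) {m<..})"
    by (rule indep_var_restrict[OF indepX]) (use m in auto)
  have h: "(\<lambda>f. f m) \<in> borel_measurable (PiM {m} (\<lambda>_. borel :: real measure))"
    by (rule measurable_component_singleton) simp
  have hx: "(\<lambda>f. f m) (restrict (\<lambda>i. X i \<omega>) {m}) = X m \<omega>" for \<omega> by simp
  show ?thesis
    using peel[OF ind h, unfolded hx, OF nondetX[OF m], of a b a' b'] ae unfolding Ym_def by simp
qed

end


context chaos begin

lemma const_case:
  assumes "\<And>S. S \<subseteq> {m..} \<Longrightarrow> finite S \<Longrightarrow> S \<noteq> {} \<Longrightarrow> k S = 0"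
    and "AE \<omega> in M. Rel (\<lambda>N. evalP k {m..N} (xs \<omega>)) (\<lambda>N. c)"
  shows "k {} = c"
proof -
  have e: "evalP k {m..N} y = k {}" for N y
  proof (rule evalP_only_empty)
    fix S assume "S \<subseteq> {m..N}" "S \<noteq> {}"
    then show "k S = 0" by (intro assms(1)) (auto intro: finite_subset)
  qed simp
  from AE_ex[OF assms(2)] show ?thesis unfolding e Rel_const by blast
qed

lemma split_V:
  assumes "N \<ge> m"
  shows "evalP k {m..N} (xs \<omega>) = evalP k {Suc m..N} (Ym m \<omega>) + X m \<omega> * evalP (\<lambda>S. k (insert m S)) {Suc m..N} (Ym m \<omega>)"
proof -
  have "{m..N} = insert m {Suc m..N}" using assms by auto
  moreover have "{Suc m..N} \<subseteq> {m<..}" by auto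
  ultimately show ?thesis using split_Y[of "{Suc m..N}" m k \<omega>] by simp
qed

lemma split_U:
  "evalP k {m..<m + Suc j} (xs \<omega>) = evalP k {Suc m..<Suc m + j} (Ym m \<omega>) + X m \<omega> * evalP (\<lambda>S. k (insert m S)) {Suc m..<Suc m + j} (Ym m \<omega>)"
proof -
  have "{m..<m + Suc j} = insert m {Suc m..<Suc m + j}" by auto
  moreover have "{Suc m..<Suc m + j} \<subseteq> {m<..}" by auto
  ultimately show ?thesis using split_Y[of "{Suc m..<Suc m + j}" m k \<omega>] by simp
qed

lemma Ym_xs:
  assumes "A \<subseteq> {m<..}" shows "evalP k A (Ym m \<omega>) = evalP k A (xs \<omega>)"
  by (rule evalP_cong) (use assms in \<open>auto simp: Ym_def xs_def\<close>)

lemma D: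
  assumes "m \<ge> 1" "\<And>S. S \<subseteq> {m..} \<Longrightarrow> finite S \<Longrightarrow> q < card S \<Longrightarrow> k S = 0"
    and "AE \<omega> in M. Rel (\<lambda>N. evalP k {m..N} (xs \<omega>)) (\<lambda>N. c)"
  shows "(\<forall>S. S \<subseteq> {m..} \<longrightarrow> finite S \<longrightarrow> S \<noteq> {} \<longrightarrow> k S = 0) \<and> k {} = c"
  using assms
proof (induction q arbitrary: m k c)
  case 0
  then have z: "\<forall>S. S \<subseteq> {m..} \<longrightarrow> finite S \<longrightarrow> S \<noteq> {} \<longrightarrow> k S = 0"
    by (auto simp: card_gt_0_iff)
  then show ?case using const_case[of m k c] 0 by blast
next
  case (Suc q)
  note outerIH = Suc.IH
  have inner: "\<And>m k c. m \<ge> 1 \<Longrightarrow> (\<And>S. S \<subseteq> {m..} \<Longrightarrow> finite S \<Longrightarrow> Suc q < card S \<Longrightarrow> k S = 0) \<Longrightarrow>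
      AE \<omega> in M. Rel (\<lambda>N. evalP k {m..N} (xs \<omega>)) (\<lambda>N. c) \<Longrightarrow>
      (\<forall>S. S \<subseteq> {m..} \<longrightarrow> finite S \<longrightarrow> S \<noteq> {} \<longrightarrow> Min S < m + j \<longrightarrow> k S = 0)" for j
  proof (induction j)
    case 0
    then show ?case by (auto dest!: Min_in)
  next
    case (Suc j m k c)
    define kB where "kB S = k (insert m S)" for S
    have mA: "\<And>n k. evalP k {Suc m..n} \<in> borel_measurable (PiM {m<..} (\<lambda>_. borel))"
      by (rule evalP_meas) auto
    have kB_eq: "kB = (\<lambda>S. k (insert m S))" by (simp add: kB_def fun_eq_iff)
    have ae1: "AE \<omega> in M. Rel (\<lambda>n. evalP k {Suc m..n} (Ym m \<omega>) + X m \<omega> * evalP kB {Suc m..n} (Ym m \<omega>))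
        (\<lambda>n. (\<lambda>_ _. c) n (Ym m \<omega>) + X m \<omega> * (\<lambda>_ _. 0) n (Ym m \<omega>))"
      using Suc.prems(3)
    proof eventually_elim
      case (elim \<omega>)
      then show ?case
        by (subst Rel_ev[where m=m and u'="\<lambda>N. evalP k {m..N} (xs \<omega>)" and v'="\<lambda>_. c"])
           (auto simp: split_V kB_eq)
    qed
    have "AE \<omega> in M. Rel (\<lambda>n. evalP k {Suc m..n} (Ym m \<omega>)) (\<lambda>n. c) \<and> Rel (\<lambda>n. evalP kB {Suc m..n} (Ym m \<omega>)) (\<lambda>n. 0)"
      using peelX[OF Suc.prems(1) mA mA _ _ ae1] by simp
    moreover have yx: "\<And>k n \<omega>. evalP k {Suc m..n} (Ym m \<omega>) = evalP k {Suc m..n} (xs \<omega>)"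
      by (rule Ym_xs) auto
    ultimately have aeA: "AE \<omega> in M. Rel (\<lambda>n. evalP k {Suc m..n} (xs \<omega>)) (\<lambda>n. c)"
      and aeB: "AE \<omega> in M. Rel (\<lambda>n. evalP kB {Suc m..n} (xs \<omega>)) (\<lambda>n. 0)"
      by (simp_all only: yx) auto
    have A: "\<forall>S. S \<subseteq> {Suc m..} \<longrightarrow> finite S \<longrightarrow> S \<noteq> {} \<longrightarrow> Min S < Suc m + j \<longrightarrow> k S = 0"
    proof (rule Suc.IH[OF _ _ aeA])
      fix S assume "S \<subseteq> {Suc m..}" "finite S" "Suc q < card S"
      then show "k S = 0" by (intro Suc.prems(2)) auto
    qed simp
    have B: "(\<forall>S. S \<subseteq> {Suc m..} \<longrightarrow> finite S \<longrightarrow> S \<noteq> {} \<longrightarrow> kB S = 0) \<and> kB {} = 0"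
    proof (rule outerIH[OF _ _ aeB])
      show "1 \<le> Suc m" by simp
      fix S assume S: "S \<subseteq> {Suc m..}" "finite S" "q < card S"
      then have "m \<notin> S" by auto
      then have "card (insert m S) = Suc (card S)" using S by simp
      then show "kB S = 0" unfolding kB_def using S by (intro Suc.prems(2)) auto
    qed
    show ?case
    proof (intro allI impI)
      fix S assume S: "S \<subseteq> {m..}" "finite S" "S \<noteq> {}" "Min S < m + Suc j"
      show "k S = 0"
      proof (cases "m \<in> S")
        case True
        then have "S = insert m (S - {m})" by auto
        moreover have "S - {m} \<subseteq> {Suc m..}" using S by auto
        ultimately show ?thesis using B S(2) unfolding kB_def by (metis finite_Diff)
      next
        case False
        have "S \<subseteq> {Suc m..}"
        proof
          fix x assume "x \<in> S"
          then have "m \<le> x" "x \<noteq> m" using S(1) False by auto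
          then show "x \<in> {Suc m..}" by simp
        qed
        then show ?thesis using A S by auto
      qed
    qed
  qed
  have z: "\<forall>S. S \<subseteq> {m..} \<longrightarrow> finite S \<longrightarrow> S \<noteq> {} \<longrightarrow> k S = 0"
  proof (intro allI impI)
    fix S assume S: "S \<subseteq> {m..}" "finite S" "S \<noteq> {}"
    show "k S = 0" using inner[of m k c "Suc (Min S)", OF Suc.prems] S by auto
  qed
  then show ?case using const_case[of m k c] Suc.prems by blast
qed

end


context chaos begin

lemma C:
  assumes "m \<ge> 1" "\<And>S. S \<subseteq> {m..} \<Longrightarrow> finite S \<Longrightarrow> q < card S \<Longrightarrow> k S = 0"
    and "AE \<omega> in M. Rel (\<lambda>n. evalP (c n) {m..<m+j} (xs \<omega>)) (\<lambda>N. evalP k {m..N} (xs \<omega>))"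
  shows "(\<forall>S. S \<subseteq> {m..<m+j} \<longrightarrow> (\<lambda>n. c n S) \<longlonglongrightarrow> k S) \<and>
         (\<forall>S. S \<subseteq> {m..} \<longrightarrow> finite S \<longrightarrow> \<not> S \<subseteq> {m..<m+j} \<longrightarrow> k S = 0)"
  using assms
proof (induction j arbitrary: m c k)
  case 0
  obtain \<omega>0 where "Rel (\<lambda>n. c n {}) (\<lambda>N. evalP k {m..N} (xs \<omega>0))"
    using AE_ex[OF 0(3)] by auto
  then obtain L where L: "(\<lambda>n. c n {}) \<longlonglongrightarrow> L" unfolding Rel_def by blast
  have "AE \<omega> in M. Rel (\<lambda>N. evalP k {m..N} (xs \<omega>)) (\<lambda>N. L)"
    using 0(3) by eventually_elim (use Rel_lim L in simp)
  from D[OF 0(1,2) this] have "\<forall>S. S \<subseteq> {m..} \<longrightarrow> finite S \<longrightarrow> S \<noteq> {} \<longrightarrow> k S = 0" "k {} = L"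
    by auto
  then show ?case using L by auto
next
  case (Suc j m c k)
  define kB where "kB S = k (insert m S)" for S
  have kB_eq: "kB = (\<lambda>S. k (insert m S))" by (simp add: kB_def fun_eq_iff)
  define cB where "cB n S = c n (insert m S)" for n S
  have cB_eq: "\<And>n. cB n = (\<lambda>S. c n (insert m S))" by (simp add: cB_def fun_eq_iff)
  have mA: "\<And>n k. evalP k {Suc m..n} \<in> borel_measurable (PiM {m<..} (\<lambda>_. borel))"
    by (rule evalP_meas) auto
  have mU: "\<And>n. evalP (c n) {Suc m..<Suc m + j} \<in> borel_measurable (PiM {m<..} (\<lambda>_. borel))"
    by (rule evalP_meas) auto
  have mUB: "\<And>n. evalP (cB n) {Suc m..<Suc m + j} \<in> borel_measurable (PiM {m<..} (\<lambda>_. borel))"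
    by (rule evalP_meas) auto
  have ae1: "AE \<omega> in M. Rel (\<lambda>n. evalP (c n) {Suc m..<Suc m + j} (Ym m \<omega>) + X m \<omega> * evalP (cB n) {Suc m..<Suc m + j} (Ym m \<omega>))
      (\<lambda>n. evalP k {Suc m..n} (Ym m \<omega>) + X m \<omega> * evalP kB {Suc m..n} (Ym m \<omega>))"
    using Suc.prems(3)
  proof eventually_elim
    case (elim \<omega>)
    then show ?case
      by (subst Rel_ev[where m=m and u'="\<lambda>n. evalP (c n) {m..<m + Suc j} (xs \<omega>)" and v'="\<lambda>N. evalP k {m..N} (xs \<omega>)"])
         (auto simp: split_V split_U[simplified] kB_eq cB_eq)
  qed
  have "AE \<omega> in M. Rel (\<lambda>n. evalP (c n) {Suc m..<Suc m + j} (Ym m \<omega>)) (\<lambda>n. evalP k {Suc m..n} (Ym m \<omega>)) \<and>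
     Rel (\<lambda>n. evalP (cB n) {Suc m..<Suc m + j} (Ym m \<omega>)) (\<lambda>n. evalP kB {Suc m..n} (Ym m \<omega>))"
    by (rule peelX[OF Suc.prems(1) mU mUB mA mA ae1])
  moreover have yx: "\<And>k n \<omega>. evalP k {Suc m..n} (Ym m \<omega>) = evalP k {Suc m..n} (xs \<omega>)"
    by (rule Ym_xs) auto
  moreover have yx2: "\<And>k \<omega>. evalP k {Suc m..<Suc m + j} (Ym m \<omega>) = evalP k {Suc m..<Suc m + j} (xs \<omega>)"
    by (rule Ym_xs) auto
  ultimately have aeA: "AE \<omega> in M. Rel (\<lambda>n. evalP (c n) {Suc m..<Suc m + j} (xs \<omega>)) (\<lambda>n. evalP k {Suc m..n} (xs \<omega>))"
    and aeB: "AE \<omega> in M. Rel (\<lambda>n. evalP (cB n) {Suc m..<Suc m + j} (xs \<omega>)) (\<lambda>n. evalP kB {Suc m..n} (xs \<omega>))"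
    by (simp_all only: yx yx2) auto
  have A: "(\<forall>S. S \<subseteq> {Suc m..<Suc m+j} \<longrightarrow> (\<lambda>n. c n S) \<longlonglongrightarrow> k S) \<and>
         (\<forall>S. S \<subseteq> {Suc m..} \<longrightarrow> finite S \<longrightarrow> \<not> S \<subseteq> {Suc m..<Suc m+j} \<longrightarrow> k S = 0)"
  proof (rule Suc.IH[OF _ _ aeA])
    fix S assume "S \<subseteq> {Suc m..}" "finite S" "q < card S"
    then show "k S = 0" by (intro Suc.prems(2)) auto
  qed simp
  have B: "(\<forall>S. S \<subseteq> {Suc m..<Suc m+j} \<longrightarrow> (\<lambda>n. cB n S) \<longlonglongrightarrow> kB S) \<and>
         (\<forall>S. S \<subseteq> {Suc m..} \<longrightarrow> finite S \<longrightarrow> \<not> S \<subseteq> {Suc m..<Suc m+j} \<longrightarrow> kB S = 0)"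
  proof (rule Suc.IH[OF _ _ aeB])
    fix S assume S: "S \<subseteq> {Suc m..}" "finite S" "q < card S"
    then have "m \<notin> S" by auto
    then have "card (insert m S) = Suc (card S)" using S by simp
    then show "kB S = 0" unfolding kB_def using S by (intro Suc.prems(2)) auto
  qed simp
  have sub: "S \<subseteq> {Suc m..}" if "S \<subseteq> {m..}" "m \<notin> S" for S
  proof
    fix x assume "x \<in> S"
    then have "m \<le> x" "x \<noteq> m" using that by auto
    then show "x \<in> {Suc m..}" by simp
  qed
  show ?case
  proof (intro conjI allI impI)
    fix S assume S: "S \<subseteq> {m..<m + Suc j}"
    show "(\<lambda>n. c n S) \<longlonglongrightarrow> k S"
    proof (cases "m \<in> S")
      case True
      then have e: "S = insert m (S - {m})" by auto
      have "S - {m} \<subseteq> {Suc m..<Suc m+j}" using S by auto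
      then have "(\<lambda>n. cB n (S - {m})) \<longlonglongrightarrow> kB (S - {m})" using B by blast
      then show ?thesis unfolding cB_def kB_def using e by simp
    next
      case False
      have "S \<subseteq> {Suc m..<Suc m+j}"
      proof
        fix x assume "x \<in> S"
        then have "m \<le> x" "x \<noteq> m" "x < m + Suc j" using S False by auto
        then show "x \<in> {Suc m..<Suc m+j}" by simp
      qed
      then show ?thesis using A by blast
    qed
  next
    fix S assume S: "S \<subseteq> {m..}" "finite S" "\<not> S \<subseteq> {m..<m + Suc j}"
    show "k S = 0"
    proof (cases "m \<in> S")
      case True
      then have e: "S = insert m (S - {m})" by auto
      have "S - {m} \<subseteq> {Suc m..}" using S by auto
      moreover have "\<not> S - {m} \<subseteq> {Suc m..<Suc m+j}" using S(3) True by auto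
      ultimately have "kB (S - {m}) = 0" using B S(2) by blast
      then show ?thesis unfolding kB_def using e by simp
    next
      case False
      then have "S \<subseteq> {Suc m..}" using sub S by blast
      moreover have "\<not> S \<subseteq> {Suc m..<Suc m+j}" using S(3) by auto
      ultimately show ?thesis using A S(2) by blast
    qed
  qed
qed

end


lemma mset_sorted_set: "mset (sorted_list_of_set A) = mset_set A"
  by (metis mset_sorted_list_of_multiset sorted_list_of_mset_set)

lemma Q_partial_sets:
  fixes g :: "nat list \<Rightarrow> real"
  assumes sym: "\<And>is js. mset is = mset js \<Longrightarrow> g is = g js"
    and diag: "\<And>is. \<not> distinct is \<Longrightarrow> g is = 0"
  shows "Q_partial p g X N \<omega> =
    (\<Sum>S\<in>{S \<in> Pow {1..N}. card S = p}. fact p * g (sorted_list_of_set S) * (\<Prod>i\<in>S. X i \<omega>))"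
proof -
  let ?h = "\<lambda>is. g is * prod_list (map (\<lambda>i. X i \<omega>) is)"
  let ?T = "tuples p {1..N}"
  let ?D = "{is \<in> ?T. distinct is}"
  let ?P = "{S \<in> Pow {1..N}. card S = p}"
  have finT: "finite ?T" unfolding tuples_def
    using finite_lists_length_eq[of "{1..N}" p] by (simp add: conj_commute)
  have "Q_partial p g X N \<omega> = sum ?h ?T" by (simp add: Q_partial_def)
  also have "\<dots> = sum ?h ?D"
    by (rule sum.mono_neutral_right) (use finT diag in auto)
  also have "\<dots> = (\<Sum>S\<in>?P. sum ?h {is \<in> ?D. set is = S})"
  proof (rule sum.group[symmetric])
    show "finite ?D" using finT by simp
    show "finite ?P" by simp
    show "set ` ?D \<subseteq> ?P" by (auto simp: tuples_def distinct_card)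
  qed
  also have "\<dots> = (\<Sum>S\<in>?P. fact p * g (sorted_list_of_set S) * (\<Prod>i\<in>S. X i \<omega>))"
  proof (rule sum.cong[OF refl])
    fix S assume S: "S \<in> ?P"
    then have finS: "finite S" by (auto intro: finite_subset)
    have eqD: "{is \<in> ?D. set is = S} = permutations_of_set S"
      using S by (auto simp: tuples_def permutations_of_set_def distinct_card)
    have "sum ?h {is \<in> ?D. set is = S} = (\<Sum>is\<in>permutations_of_set S. g (sorted_list_of_set S) * (\<Prod>i\<in>S. X i \<omega>))"
      unfolding eqD
    proof (rule sum.cong[OF refl])
      fix ls assume "ls \<in> permutations_of_set S"
      then have d: "distinct ls" "set ls = S" by (auto simp: permutations_of_set_def)
      have "mset ls = mset (sorted_list_of_set S)"
        using d by (simp add: mset_sorted_set mset_set_set[symmetric])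
      then have "g ls = g (sorted_list_of_set S)" by (rule sym)
      moreover have "prod_list (map (\<lambda>i. X i \<omega>) ls) = (\<Prod>i\<in>S. X i \<omega>)"
        using prod.distinct_set_conv_list[OF d(1), of "\<lambda>i. X i \<omega>"] d(2) by simp
      ultimately show "?h ls = g (sorted_list_of_set S) * (\<Prod>i\<in>S. X i \<omega>)" by simp
    qed
    also have "\<dots> = fact p * g (sorted_list_of_set S) * (\<Prod>i\<in>S. X i \<omega>)"
      using S finS by simp
    finally show "sum ?h {is \<in> ?D. set is = S} = fact p * g (sorted_list_of_set S) * (\<Prod>i\<in>S. X i \<omega>)" .
  qed
  finally show ?thesis .
qed

lemma evalP_group:
  assumes "finite A" "\<And>S. S \<subseteq> A \<Longrightarrow> q < card S \<Longrightarrow> k S = 0"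
  shows "evalP k A y = k {} + (\<Sum>p\<in>{1..q}. \<Sum>S\<in>{S \<in> Pow A. card S = p}. k S * (\<Prod>i\<in>S. y i))"
proof -
  have "evalP k A y = (\<Sum>S\<in>{S \<in> Pow A. card S \<le> q}. k S * (\<Prod>i\<in>S. y i))"
    unfolding evalP_def by (rule sum.mono_neutral_right) (use assms in \<open>auto simp: not_le\<close>)
  also have "\<dots> = (\<Sum>p\<in>{0..q}. \<Sum>S\<in>{S \<in> {S \<in> Pow A. card S \<le> q}. card S = p}. k S * (\<Prod>i\<in>S. y i))"
    by (rule sum.group[symmetric]) (use assms in auto)
  also have "\<dots> = (\<Sum>p\<in>{0..q}. \<Sum>S\<in>{S \<in> Pow A. card S = p}. k S * (\<Prod>i\<in>S. y i))"
    by (intro sum.cong refl) auto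
  also have "\<dots> = (\<Sum>S\<in>{S \<in> Pow A. card S = 0}. k S * (\<Prod>i\<in>S. y i)) + (\<Sum>p\<in>{1..q}. \<Sum>S\<in>{S \<in> Pow A. card S = p}. k S * (\<Prod>i\<in>S. y i))"
    by (simp add: sum.atLeast_Suc_atMost)
  also have "{S \<in> Pow A. card S = 0} = {{}}"
    using assms(1) by (auto simp: card_eq_0_iff dest: finite_subset)
  finally show ?thesis by simp
qed



theorem theorem1p4:
  fixes M :: "'a measure"
    and X :: "nat \<Rightarrow> 'a \<Rightarrow> real"
    and q d :: nat
    and Fn :: "nat \<Rightarrow> 'a \<Rightarrow> real" and F :: "'a \<Rightarrow> real"
    and fn :: "nat \<Rightarrow> nat \<Rightarrow> nat list \<Rightarrow> real" and f :: "nat \<Rightarrow> nat list \<Rightarrow> real"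
  assumes "prob_space M"
    and "q \<ge> 2"
    and indep: "prob_space.indep_vars M (\<lambda>_. borel) X {1..}"
    and integr: "\<And>k. k \<ge> 1 \<Longrightarrow> integrable M (X k)"
    and centered: "\<And>k. k \<ge> 1 \<Longrightarrow> integral\<^sup>L M (X k) = 0"
    and nondet: "\<And>k. k \<ge> 1 \<Longrightarrow> \<not> (\<exists>c. AE \<omega> in M. X k \<omega> = c)"
    and Fn_meas: "\<And>n. n \<ge> 1 \<Longrightarrow> Fn n \<in> borel_measurable M"
    and fn_l2: "\<And>p n. p \<in> {1..q} \<Longrightarrow> n \<ge> 1 \<Longrightarrow> l2_sym0 p (fn p n)"
    and Fn_repr: "\<And>n. n \<ge> 1 \<Longrightarrow>
       AE \<omega> in M. Fn n \<omega> = integral\<^sup>L M (Fn n) + (\<Sum>p\<in>{1..q}. Q p (fn p n) X \<omega>)"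
    and "d > q"
    and supp: "\<And>p n is. p \<in> {1..q} \<Longrightarrow> n \<ge> 1 \<Longrightarrow> fn p n is \<noteq> 0 \<Longrightarrow> set is \<subseteq> {1..d}"
    and F_meas: "F \<in> borel_measurable M"
    and F_int: "integrable M F"
    and f_l2: "\<And>p. p \<in> {1..q} \<Longrightarrow> l2_sym0 p (f p)"
    and f_wd: "\<And>p. p \<in> {1..q} \<Longrightarrow> AE \<omega> in M. Q_defined p (f p) X \<omega>"
    and F_repr: "AE \<omega> in M. F \<omega> = integral\<^sup>L M F + (\<Sum>p\<in>{1..q}. Q p (f p) X \<omega>)"
    and conv: "AE \<omega> in M. (\<lambda>n. Fn n \<omega>) \<longlonglongrightarrow> F \<omega>"
  shows "(\<lambda>n. integral\<^sup>L M (Fn n)) \<longlonglongrightarrow> integral\<^sup>L M F \<and>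
     (\<forall>p\<in>{1..q}. AE \<omega> in M. (\<lambda>n. Q p (fn p n) X \<omega>) \<longlonglongrightarrow> Q p (f p) X \<omega>)"
proof -
  interpret prob_space M by fact
  interpret CH: chaos M X
    by unfold_locales (use indep nondet in auto)
  define K where "K n S = (if S = {} then integral\<^sup>L M (Fn n) else if card S \<le> q
      then fact (card S) * fn (card S) n (sorted_list_of_set S) else 0)" for n S
  define kk where "kk S = (if S = {} then integral\<^sup>L M F else if card S \<le> q
      then fact (card S) * f (card S) (sorted_list_of_set S) else 0)" for S
  have symfn: "\<And>is js. mset is = mset js \<Longrightarrow> fn p n is = fn p n js"
    and diagfn: "\<And>is. \<not> distinct is \<Longrightarrow> fn p n is = 0" if "p \<in> {1..q}" "n \<ge> 1" for p n
    using fn_l2[OF that] unfolding l2_sym0_def by blast+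
  have symf: "\<And>is js. mset is = mset js \<Longrightarrow> f p is = f p js"
    and diagf: "\<And>is. \<not> distinct is \<Longrightarrow> f p is = 0" if "p \<in> {1..q}" for p
    using f_l2[OF that] unfolding l2_sym0_def by blast+
  have card_pos: "S \<noteq> {}" if "card S = p" "p \<in> {1..q}" for S p
    using that by auto
  have Kp: "K n S = fact p * fn p n (sorted_list_of_set S)" if "card S = p" "p \<in> {1..q}" for n S p
    using that card_pos[OF that] by (auto simp: K_def)
  have kkp: "kk S = fact p * f p (sorted_list_of_set S)" if "card S = p" "p \<in> {1..q}" for S p
    using that card_pos[OF that] by (auto simp: kk_def)
  have Qn: "Q p (fn p n) X \<omega> = (\<Sum>S\<in>{S \<in> Pow {1..d}. card S = p}. K n S * (\<Prod>i\<in>S. X i \<omega>))"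
    if p: "p \<in> {1..q}" and n: "n \<ge> 1" for p n \<omega>
  proof -
    let ?c = "\<Sum>S\<in>{S \<in> Pow {1..d}. card S = p}. fact p * fn p n (sorted_list_of_set S) * (\<Prod>i\<in>S. X i \<omega>)"
    have "Q_partial p (fn p n) X N \<omega> = ?c" if N: "N \<ge> d" for N
    proof -
      have "Q_partial p (fn p n) X N \<omega> = (\<Sum>S\<in>{S \<in> Pow {1..N}. card S = p}. fact p * fn p n (sorted_list_of_set S) * (\<Prod>i\<in>S. X i \<omega>))"
        by (rule Q_partial_sets[OF symfn[OF p n] diagfn[OF p n]])
      also have "\<dots> = ?c"
      proof (rule sum.mono_neutral_right)
        show "finite {S \<in> Pow {1..N}. card S = p}" by simp
        show "{S \<in> Pow {1..d}. card S = p} \<subseteq> {S \<in> Pow {1..N}. card S = p}" using N by auto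
        show "\<forall>S\<in>{S \<in> Pow {1..N}. card S = p} - {S \<in> Pow {1..d}. card S = p}.
            fact p * fn p n (sorted_list_of_set S) * (\<Prod>i\<in>S. X i \<omega>) = 0"
        proof
          fix S assume S: "S \<in> {S \<in> Pow {1..N}. card S = p} - {S \<in> Pow {1..d}. card S = p}"
          then have fin: "finite S" by (auto intro: finite_subset)
          have "fn p n (sorted_list_of_set S) = 0"
          proof (rule ccontr)
            assume "fn p n (sorted_list_of_set S) \<noteq> 0"
            from supp[OF p n this] fin have "S \<subseteq> {1..d}" by simp
            with S show False by auto
          qed
          then show "fact p * fn p n (sorted_list_of_set S) * (\<Prod>i\<in>S. X i \<omega>) = 0" by simp
        qed
      qed
      finally show ?thesis .
    qed
    then have "(\<lambda>N. Q_partial p (fn p n) X N \<omega>) \<longlonglongrightarrow> ?c"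
      by (intro tendsto_eventually) (auto simp: eventually_sequentially)
    then have "Q p (fn p n) X \<omega> = ?c" unfolding Q_def by (rule limI)
    also have "\<dots> = (\<Sum>S\<in>{S \<in> Pow {1..d}. card S = p}. K n S * (\<Prod>i\<in>S. X i \<omega>))"
      by (intro sum.cong refl) (simp add: Kp[OF _ p])
    finally show ?thesis .
  qed
  have Qf: "Q_partial p (f p) X N \<omega> = (\<Sum>S\<in>{S \<in> Pow {1..N}. card S = p}. kk S * (\<Prod>i\<in>S. X i \<omega>))"
    if p: "p \<in> {1..q}" for p N \<omega>
  proof -
    have "Q_partial p (f p) X N \<omega> = (\<Sum>S\<in>{S \<in> Pow {1..N}. card S = p}. fact p * f p (sorted_list_of_set S) * (\<Prod>i\<in>S. X i \<omega>))"
      by (rule Q_partial_sets[OF symf[OF p] diagf[OF p]])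
    also have "\<dots> = (\<Sum>S\<in>{S \<in> Pow {1..N}. card S = p}. kk S * (\<Prod>i\<in>S. X i \<omega>))"
      by (intro sum.cong refl) (simp add: kkp[OF _ p])
    finally show ?thesis .
  qed
  have degK: "K n S = 0" if "q < card S" for n S using that by (auto simp: K_def)
  have degk: "kk S = 0" if "q < card S" for S using that by (auto simp: kk_def)
  have dd: "{1..<1+d} = {1..d}" by auto
  have U: "AE \<omega> in M. Fn n \<omega> = evalP (K n) {1..<1+d} (CH.xs \<omega>)" if n: "n \<ge> 1" for n
    using Fn_repr[OF n]
  proof eventually_elim
    case (elim \<omega>)
    have "evalP (K n) {1..<1+d} (CH.xs \<omega>) = K n {} + (\<Sum>p\<in>{1..q}. \<Sum>S\<in>{S \<in> Pow {1..<1+d}. card S = p}. K n S * (\<Prod>i\<in>S. CH.xs \<omega> i))"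
      by (rule evalP_group) (use degK in auto)
    also have "\<dots> = integral\<^sup>L M (Fn n) + (\<Sum>p\<in>{1..q}. Q p (fn p n) X \<omega>)"
    proof (intro arg_cong2[where f="(+)"] sum.cong refl)
      show "K n {} = integral\<^sup>L M (Fn n)" by (simp add: K_def)
      fix p assume "p \<in> {1..q}"
      then show "(\<Sum>S\<in>{S \<in> Pow {1..<1+d}. card S = p}. K n S * (\<Prod>i\<in>S. CH.xs \<omega> i)) = Q p (fn p n) X \<omega>"
        using Qn[of p n \<omega>] n dd by (simp add: CH.xs_def)
    qed
    finally show ?case using elim by simp
  qed
  have V: "AE \<omega> in M. (\<lambda>N. evalP kk {1..N} (CH.xs \<omega>)) \<longlonglongrightarrow> F \<omega>"
  proof -
    have "AE \<omega> in M. \<forall>p\<in>{1..q}. Q_defined p (f p) X \<omega>"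
      by (rule AE_finite_allI) (use f_wd in auto)
    then show ?thesis using F_repr
    proof eventually_elim
      case (elim \<omega>)
      have e: "evalP kk {1..N} (CH.xs \<omega>) = integral\<^sup>L M F + (\<Sum>p\<in>{1..q}. Q_partial p (f p) X N \<omega>)" for N
      proof -
        have "evalP kk {1..N} (CH.xs \<omega>) = kk {} + (\<Sum>p\<in>{1..q}. \<Sum>S\<in>{S \<in> Pow {1..N}. card S = p}. kk S * (\<Prod>i\<in>S. CH.xs \<omega> i))"
          by (rule evalP_group) (use degk in auto)
        also have "\<dots> = integral\<^sup>L M F + (\<Sum>p\<in>{1..q}. Q_partial p (f p) X N \<omega>)"
        proof (intro arg_cong2[where f="(+)"] sum.cong refl)
          show "kk {} = integral\<^sup>L M F" by (simp add: kk_def)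
          fix p assume "p \<in> {1..q}"
          then show "(\<Sum>S\<in>{S \<in> Pow {1..N}. card S = p}. kk S * (\<Prod>i\<in>S. CH.xs \<omega> i)) = Q_partial p (f p) X N \<omega>"
            using Qf[of p N \<omega>] by (simp add: CH.xs_def)
        qed
        finally show ?thesis .
      qed
      have "(\<lambda>N. integral\<^sup>L M F + (\<Sum>p\<in>{1..q}. Q_partial p (f p) X N \<omega>)) \<longlonglongrightarrow> integral\<^sup>L M F + (\<Sum>p\<in>{1..q}. Q p (f p) X \<omega>)"
      proof (intro tendsto_add tendsto_const tendsto_sum)
        fix p assume "p \<in> {1..q}"
        then have "Q_defined p (f p) X \<omega>" using elim by blast
        then show "(\<lambda>N. Q_partial p (f p) X N \<omega>) \<longlonglongrightarrow> Q p (f p) X \<omega>"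
          unfolding Q_defined_def Q_def by (simp add: convergent_LIMSEQ_iff)
      qed
      then show ?case unfolding e using elim by simp
    qed
  qed
  have R: "AE \<omega> in M. Rel (\<lambda>n. evalP (K n) {1..<1+d} (CH.xs \<omega>)) (\<lambda>N. evalP kk {1..N} (CH.xs \<omega>))"
  proof -
    have "AE \<omega> in M. \<forall>n. n \<ge> 1 \<longrightarrow> Fn n \<omega> = evalP (K n) {1..<1+d} (CH.xs \<omega>)"
      unfolding AE_all_countable using U by auto
    then show ?thesis using V conv
    proof eventually_elim
      case (elim \<omega>)
      have "eventually (\<lambda>n. Fn n \<omega> = evalP (K n) {1..<1+d} (CH.xs \<omega>)) sequentially"
        using elim(1) by (auto simp: eventually_sequentially)
      then have "(\<lambda>n. evalP (K n) {1..<1+d} (CH.xs \<omega>)) \<longlonglongrightarrow> F \<omega>"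
        by (rule Lim_transform_eventually[OF elim(3)])
      then show ?case unfolding Rel_def using elim(2) by blast
    qed
  qed
  have CC: "(\<forall>S. S \<subseteq> {1..<1+d} \<longrightarrow> (\<lambda>n. K n S) \<longlonglongrightarrow> kk S) \<and>
         (\<forall>S. S \<subseteq> {1..} \<longrightarrow> finite S \<longrightarrow> \<not> S \<subseteq> {1..<1+d} \<longrightarrow> kk S = 0)"
    by (rule CH.C[of 1 q kk, OF _ _ R]) (use degk in auto)
  have conv1: "(\<lambda>n. integral\<^sup>L M (Fn n)) \<longlonglongrightarrow> integral\<^sup>L M F"
  proof -
    have "(\<lambda>n. K n {}) \<longlonglongrightarrow> kk {}" using CC by blast
    then show ?thesis by (simp add: K_def kk_def)
  qed
  have conv2: "AE \<omega> in M. (\<lambda>n. Q p (fn p n) X \<omega>) \<longlonglongrightarrow> Q p (f p) X \<omega>" if p: "p \<in> {1..q}" for p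
  proof (rule AE_I2)
    fix \<omega>
    let ?c = "\<Sum>S\<in>{S \<in> Pow {1..d}. card S = p}. kk S * (\<Prod>i\<in>S. X i \<omega>)"
    have "Q_partial p (f p) X N \<omega> = ?c" if N: "N \<ge> d" for N
    proof -
      have "Q_partial p (f p) X N \<omega> = (\<Sum>S\<in>{S \<in> Pow {1..N}. card S = p}. kk S * (\<Prod>i\<in>S. X i \<omega>))"
        by (rule Qf[OF p])
      also have "\<dots> = ?c"
      proof (rule sum.mono_neutral_right)
        show "finite {S \<in> Pow {1..N}. card S = p}" by simp
        show "{S \<in> Pow {1..d}. card S = p} \<subseteq> {S \<in> Pow {1..N}. card S = p}" using N by auto
        show "\<forall>S\<in>{S \<in> Pow {1..N}. card S = p} - {S \<in> Pow {1..d}. card S = p}. kk S * (\<Prod>i\<in>S. X i \<omega>) = 0"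
        proof
          fix S assume S: "S \<in> {S \<in> Pow {1..N}. card S = p} - {S \<in> Pow {1..d}. card S = p}"
          then have "finite S" "S \<subseteq> {1..}" "\<not> S \<subseteq> {1..<1+d}" by (auto intro: finite_subset)
          then show "kk S * (\<Prod>i\<in>S. X i \<omega>) = 0" using CC by simp
        qed
      qed
      finally show ?thesis .
    qed
    then have "(\<lambda>N. Q_partial p (f p) X N \<omega>) \<longlonglongrightarrow> ?c"
      by (intro tendsto_eventually) (auto simp: eventually_sequentially)
    then have Qfe: "Q p (f p) X \<omega> = ?c" unfolding Q_def by (rule limI)
    have "(\<lambda>n. \<Sum>S\<in>{S \<in> Pow {1..d}. card S = p}. K n S * (\<Prod>i\<in>S. X i \<omega>)) \<longlonglongrightarrow> ?c"
    proof (intro tendsto_sum tendsto_mult_right)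
      fix S assume "S \<in> {S \<in> Pow {1..d}. card S = p}"
      then have "S \<subseteq> {1..<1+d}" by auto
      then show "(\<lambda>n. K n S) \<longlonglongrightarrow> kk S" using CC by blast
    qed
    moreover have "eventually (\<lambda>n. (\<Sum>S\<in>{S \<in> Pow {1..d}. card S = p}. K n S * (\<Prod>i\<in>S. X i \<omega>)) = Q p (fn p n) X \<omega>) sequentially"
      using Qn[OF p] by (auto simp: eventually_sequentially intro!: exI[of _ 1])
    ultimately show "(\<lambda>n. Q p (fn p n) X \<omega>) \<longlonglongrightarrow> Q p (f p) X \<omega>"
      unfolding Qfe by (rule Lim_transform_eventually)
  qed
  show ?thesis using conv1 conv2 by blast
qed

end
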